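(* Fix $\gamma\ge1$, $\beta\in(0,1)$ and $r>0$ with $r>\beta$. Let $\Psi$ be a continuous survival function that is asymptotically generalized Gaussian on the right with exponent $\gamma$. For each $n$, let $m=\lfloor n^{1-\beta}\rfloor$ and $\mu=(\gamma r\log n)^{1/\gamma}$, and let $\mathscr{F}\subset[n]$ be a uniformly random subset of size $m$. Set $\mu_i=\mu$ for $i\in\mathscr{F}$ and $\mu_i=0$ otherwise. Let $X_1,\dots,X_n$ be independent with $X_i$ having survival function $\Psi(\cdot-\mu_i)$. Let $q=q_n\in(0,1)$ satisfy $n^a q_n\to\infty$ for every fixed $a>0$. Then the Benjamini–Hochberg procedure at level $q$ satisfies $\mathrm{FNP}\to0$ in probability as $n\to\infty$. If in addition $q_n\to0$, then its risk $\mathrm{FDR}+\mathrm{FNR}$ tends to $0$.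
   Context: The survival function of $Y$ is $y\mapsto\mathbb{P}(Y\ge y)$. A survival function $\Psi$ is AGG on the right with exponent $\gamma>0$ if $\lim_{x\to\infty}x^{-\gamma}\log\Psi(x)=-1/\gamma$. For a rejection set $\mathscr{R}$: - $\mathrm{FDP}(\mathscr{R})=|\mathscr{R}\setminus\mathscr{F}|/|\mathscr{R}|$, - $\mathrm{FNP}(\mathscr{R})=|\mathscr{F}\setminus\mathscr{R}|/|\mathscr{F}|$, with $0/0=0$. $\mathrm{FDR}$ and $\mathrm{FNR}$ are the expectations of $\mathrm{FDP}$ and $\mathrm{FNP}$. Benjamini–Hochberg (BH) procedure: let $P_i=\Psi(X_i)$ be the P-values, and let $P_{(1)}\le\cdots\le P_{(n)}$ be their ordered values. Let $X_{(1)}\ge\cdots\ge X_{(n)}$ be the decreasing order statistics. Set $\iota_{\rm BH}=\max\{i: P_{(i)}\le iq/n\}$. The procedure rejects $\{i: X_i\ge X_{(\iota_{\rm BH})}\}$, and rejects nothing if the set in the definition of $\iota_{\rm BH}$ is empty. *)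

theory Defs
  imports "HOL-Probability.Probability"
begin

definition AGG_right :: "(real \<Rightarrow> real) \<Rightarrow> real \<Rightarrow> bool" where
  "AGG_right \<Psi> \<gamma> \<longleftrightarrow> \<gamma> > 0 \<and>
     ((\<lambda>x. x powr (-\<gamma>) * ln (\<Psi> x)) \<longlongrightarrow> -1/\<gamma>) at_top"

text \<open>Decreasing order statistics X_(1) >= ... >= X_(n) of X_0,...,X_(n-1); index k in 1..n.\<close>
definition X_ord :: "nat \<Rightarrow> (nat \<Rightarrow> real) \<Rightarrow> nat \<Rightarrow> real" where
  "X_ord n X k = rev (sort (map X [0..<n])) ! (k - 1)"

definition P_ord :: "(real \<Rightarrow> real) \<Rightarrow> nat \<Rightarrow> (nat \<Rightarrow> real) \<Rightarrow> nat \<Rightarrow> real" where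
  "P_ord \<Psi> n X k = sort (map (\<lambda>i. \<Psi> (X i)) [0..<n]) ! (k - 1)"

definition BH_index :: "(real \<Rightarrow> real) \<Rightarrow> real \<Rightarrow> nat \<Rightarrow> (nat \<Rightarrow> real) \<Rightarrow> nat" where
  "BH_index \<Psi> q n X =
     (let S = {i \<in> {1..n}. P_ord \<Psi> n X i \<le> real i * q / real n} in
      if S = {} then 0 else Max S)"

definition BH_rej :: "(real \<Rightarrow> real) \<Rightarrow> real \<Rightarrow> nat \<Rightarrow> (nat \<Rightarrow> real) \<Rightarrow> nat set" where
  "BH_rej \<Psi> q n X =
     (if BH_index \<Psi> q n X = 0 then {}
      else {i \<in> {..<n}. X i \<ge> X_ord n X (BH_index \<Psi> q n X)})"

definition FDP :: "nat set \<Rightarrow> nat set \<Rightarrow> real" where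
  "FDP F R = real (card (R - F)) / real (card R)"

definition FNP :: "nat set \<Rightarrow> nat set \<Rightarrow> real" where
  "FNP F R = real (card (F - R)) / real (card F)"

text \<open>Joint law of (F, X): F uniform among subsets of {0..<n} of size m; given F,
  the X_i are independent, X_i distributed as Y + mu_i where Y ~ D,
  mu_i = mu for i in F, 0 otherwise.\<close>
definition sparse_model ::
  "real measure \<Rightarrow> nat \<Rightarrow> nat \<Rightarrow> real \<Rightarrow> (nat set \<times> (nat \<Rightarrow> real)) measure" where
  "sparse_model D n m \<mu> =
     bind (uniform_count_measure {A. A \<subseteq> {..<n} \<and> card A = m})
       (\<lambda>F. distr (PiM {..<n} (\<lambda>i. distr D borel (\<lambda>x. x + (if i \<in> F then \<mu> else 0))))
                   (count_space (Pow {..<n}) \<Otimes>\<^sub>M PiM {..<n} (\<lambda>_. borel))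
                   (\<lambda>x. (F, x)))"

end

theory Submission
  imports Defs "HOL-Real_Asymp.Real_Asymp"
begin


lemma len_filter_sort: "length (filter P (sort xs)) = length (filter P (xs::real list))"
  by (metis mset_filter mset_sort size_mset)

lemma card_filter_idx: "card {j. j < length xs \<and> P (xs ! j)} = length (filter P xs)"
  by (simp add: length_filter_conv_card)

lemma card_sort_idx: "card {j. j < length xs \<and> P (xs ! j)} = card {j. j < length xs \<and> P (sort xs ! (j::nat))}"
  for xs :: "real list"
  using card_filter_idx[of xs P] card_filter_idx[of "sort xs" P] len_filter_sort[of P xs] by simp

lemma sorted_lt_card:
  assumes "sorted s" "p < length s"
  shows "card {j. j < length s \<and> s ! j < s ! p} \<le> p"
proof -
  have "{j. j < length s \<and> s ! j < s ! p} \<subseteq> {..<p}"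
  proof
    fix j assume "j \<in> {j. j < length s \<and> s ! j < s ! p}"
    then have "j < length s" "s!j < s!p" by auto
    then show "j \<in> {..<p}" using sorted_nth_mono[OF assms(1), of p j] by (cases "p \<le> j") auto
  qed
  then show ?thesis by (metis card_lessThan card_mono finite_lessThan)
qed

lemma sorted_le_card:
  assumes "sorted s" "p < length s"
  shows "card {j. j < length s \<and> s ! j \<le> s ! p} \<ge> Suc p"
proof -
  have "{..p} \<subseteq> {j. j < length s \<and> s ! j \<le> s ! p}"
    using sorted_nth_mono[OF assms(1)] assms(2) by auto
  then show ?thesis by (metis card_atMost card_mono finite_Collect_conjI finite_Collect_less_nat)
qed

lemma sorted_gt_card:
  assumes "sorted s" "p < length s"
  shows "card {j. j < length s \<and> s ! j > s ! p} \<le> length s - Suc p"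
proof -
  have "{j. j < length s \<and> s ! j > s ! p} \<subseteq> {Suc p..<length s}"
  proof
    fix j assume "j \<in> {j. j < length s \<and> s ! j > s ! p}"
    then have "j < length s" "s!j > s!p" by auto
    then show "j \<in> {Suc p..<length s}" using sorted_nth_mono[OF assms(1), of j p] assms(2)
      by (cases "j \<le> p") auto
  qed
  then show ?thesis by (metis card_atLeastLessThan card_mono finite_atLeastLessThan)
qed

lemma sorted_ge_card:
  assumes "sorted s" "p < length s"
  shows "card {j. j < length s \<and> s ! j \<ge> s ! p} \<ge> length s - p"
proof -
  have "{p..<length s} \<subseteq> {j. j < length s \<and> s ! j \<ge> s ! p}"
    using sorted_nth_mono[OF assms(1)] assms(2) by auto
  then show ?thesis by (metis card_atLeastLessThan card_mono finite_Collect_conjI finite_Collect_less_nat)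
qed

lemma map_idx_card: "card {j. j < length (map X [0..<n]) \<and> P (map X [0..<n] ! j)} = card {j. j < n \<and> P (X j)}"
  by (rule arg_cong[where f=card]) auto

lemma asc_lt:
  fixes f :: "nat \<Rightarrow> real"
  assumes "1 \<le> k" "k \<le> n"
  shows "card {j. j < n \<and> f j < sort (map f [0..<n]) ! (k-1)} < k"
proof -
  let ?xs = "map f [0..<n]"
  have "card {j. j < n \<and> f j < sort ?xs ! (k-1)} = card {j. j < length ?xs \<and> ?xs ! j < sort ?xs ! (k-1)}"
    by (rule arg_cong[where f=card]) auto
  also have "\<dots> = card {j. j < length (sort ?xs) \<and> sort ?xs ! j < sort ?xs ! (k-1)}"
    using card_sort_idx[of ?xs "\<lambda>x. x < sort ?xs ! (k-1)"] by simp
  also have "\<dots> \<le> k - 1" by (rule sorted_lt_card) (use assms in auto)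
  finally show ?thesis using assms by linarith
qed

lemma asc_le:
  fixes f :: "nat \<Rightarrow> real"
  assumes "1 \<le> k" "k \<le> n"
  shows "card {j. j < n \<and> f j \<le> sort (map f [0..<n]) ! (k-1)} \<ge> k"
proof -
  let ?xs = "map f [0..<n]"
  have "card {j. j < n \<and> f j \<le> sort ?xs ! (k-1)} = card {j. j < length ?xs \<and> ?xs ! j \<le> sort ?xs ! (k-1)}"
    by (rule arg_cong[where f=card]) auto
  also have "\<dots> = card {j. j < length (sort ?xs) \<and> sort ?xs ! j \<le> sort ?xs ! (k-1)}"
    using card_sort_idx[of ?xs "\<lambda>x. x \<le> sort ?xs ! (k-1)"] by simp
  also have "\<dots> \<ge> Suc (k - 1)" by (rule sorted_le_card) (use assms in auto)
  finally show ?thesis using assms by linarith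
qed

lemma desc_gt:
  fixes f :: "nat \<Rightarrow> real"
  assumes "1 \<le> k" "k \<le> n"
  shows "card {j. j < n \<and> f j > rev (sort (map f [0..<n])) ! (k-1)} < k"
proof -
  let ?xs = "map f [0..<n]"
  have r: "rev (sort ?xs) ! (k-1) = sort ?xs ! (n - k)"
    using assms by (simp add: rev_nth)
  have "card {j. j < n \<and> f j > sort ?xs ! (n-k)} = card {j. j < length ?xs \<and> ?xs ! j > sort ?xs ! (n-k)}"
    by (rule arg_cong[where f=card]) auto
  also have "\<dots> = card {j. j < length (sort ?xs) \<and> sort ?xs ! j > sort ?xs ! (n-k)}"
    using card_sort_idx[of ?xs "\<lambda>x. x > sort ?xs ! (n-k)"] by simp
  also have "\<dots> \<le> length (sort ?xs) - Suc (n-k)" by (rule sorted_gt_card) (use assms in auto)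
  finally show ?thesis using assms r by simp
qed

lemma desc_ge:
  fixes f :: "nat \<Rightarrow> real"
  assumes "1 \<le> k" "k \<le> n"
  shows "card {j. j < n \<and> f j \<ge> rev (sort (map f [0..<n])) ! (k-1)} \<ge> k"
proof -
  let ?xs = "map f [0..<n]"
  have r: "rev (sort ?xs) ! (k-1) = sort ?xs ! (n - k)"
    using assms by (simp add: rev_nth)
  have "card {j. j < n \<and> f j \<ge> sort ?xs ! (n-k)} = card {j. j < length ?xs \<and> ?xs ! j \<ge> sort ?xs ! (n-k)}"
    by (rule arg_cong[where f=card]) auto
  also have "\<dots> = card {j. j < length (sort ?xs) \<and> sort ?xs ! j \<ge> sort ?xs ! (n-k)}"
    using card_sort_idx[of ?xs "\<lambda>x. x \<ge> sort ?xs ! (n-k)"] by simp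
  also have "\<dots> \<ge> length (sort ?xs) - (n-k)" by (rule sorted_ge_card) (use assms in auto)
  finally show ?thesis using assms r by simp
qed


lemma BH_S_finite: "finite {i \<in> {1..n}. P_ord \<Psi> n X i \<le> real i * q / real n}" by simp

lemma bh_ge:
  assumes "1 \<le> k" "k \<le> n" "P_ord \<Psi> n X k \<le> real k * q / real n"
  shows "k \<le> BH_index \<Psi> q n X" "BH_index \<Psi> q n X \<noteq> 0"
proof -
  let ?S = "{i \<in> {1..n}. P_ord \<Psi> n X i \<le> real i * q / real n}"
  have k: "k \<in> ?S" using assms by auto
  then have ne: "?S \<noteq> {}" by auto
  have "BH_index \<Psi> q n X = Max ?S" unfolding BH_index_def Let_def by (rule if_not_P[OF ne])
  moreover have "k \<le> Max ?S" using k by (simp add: Max_ge)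
  ultimately show "k \<le> BH_index \<Psi> q n X" "BH_index \<Psi> q n X \<noteq> 0" using assms by linarith+
qed

lemma bh_props:
  assumes "BH_index \<Psi> q n X \<noteq> 0"
  shows "1 \<le> BH_index \<Psi> q n X" "BH_index \<Psi> q n X \<le> n"
    "P_ord \<Psi> n X (BH_index \<Psi> q n X) \<le> real (BH_index \<Psi> q n X) * q / real n"
proof -
  let ?S = "{i \<in> {1..n}. P_ord \<Psi> n X i \<le> real i * q / real n}"
  have ne: "?S \<noteq> {}" using assms unfolding BH_index_def Let_def by (auto split: if_splits)
  have e: "BH_index \<Psi> q n X = Max ?S" unfolding BH_index_def Let_def by (rule if_not_P[OF ne])
  have "Max ?S \<in> ?S" using ne by (intro Max_in) auto
  then show "1 \<le> BH_index \<Psi> q n X" "BH_index \<Psi> q n X \<le> n"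
    "P_ord \<Psi> n X (BH_index \<Psi> q n X) \<le> real (BH_index \<Psi> q n X) * q / real n"
    using e by auto
qed

lemma bh_rej_eq:
  assumes "BH_index \<Psi> q n X \<noteq> 0"
  shows "BH_rej \<Psi> q n X = {i. i < n \<and> X_ord n X (BH_index \<Psi> q n X) \<le> X i}"
  using assms unfolding BH_rej_def by auto

lemma bh_rej_sub: "BH_rej \<Psi> q n X \<subseteq> {..<n}"
  unfolding BH_rej_def by auto

lemma bh_card:
  assumes "BH_index \<Psi> q n X \<noteq> 0"
  shows "BH_index \<Psi> q n X \<le> card (BH_rej \<Psi> q n X)"
proof -
  note p = bh_props[OF assms]
  show ?thesis
    using desc_ge[OF p(1) p(2), of X] bh_rej_eq[OF assms] unfolding X_ord_def by simp
qed

lemma bh_rej_pval: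
  assumes anti: "\<And>x y. x \<le> y \<Longrightarrow> \<Psi> y \<le> \<Psi> x"
    and nz: "BH_index \<Psi> q n X \<noteq> 0" and i: "i \<in> BH_rej \<Psi> q n X"
  shows "\<Psi> (X i) \<le> real (BH_index \<Psi> q n X) * q / real n"
proof -
  let ?k = "BH_index \<Psi> q n X"
  note p = bh_props[OF nz]
  have iX: "i < n" "X_ord n X ?k \<le> X i" using i bh_rej_eq[OF nz] by auto
  have "\<Psi> (X i) \<le> P_ord \<Psi> n X ?k"
  proof (rule ccontr)
    assume c: "\<not> ?thesis"
    have "{j. j < n \<and> \<Psi> (X j) \<le> P_ord \<Psi> n X ?k} \<subseteq> {j. j < n \<and> X j > X_ord n X ?k}"
    proof safe
      fix j assume "j < n" "\<Psi> (X j) \<le> P_ord \<Psi> n X ?k"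
      then have "\<Psi> (X j) < \<Psi> (X i)" using c by simp
      then have "X j > X i" using anti[of "X j" "X i"] by (cases "X j \<le> X i") auto
      then show "X j > X_ord n X ?k" using iX by simp
    qed
    then have "card {j. j < n \<and> \<Psi> (X j) \<le> P_ord \<Psi> n X ?k} \<le> card {j. j < n \<and> X j > X_ord n X ?k}"
      by (intro card_mono) auto
    moreover have "card {j. j < n \<and> \<Psi> (X j) \<le> P_ord \<Psi> n X ?k} \<ge> ?k"
      using asc_le[OF p(1) p(2), of "\<lambda>i. \<Psi> (X i)"] unfolding P_ord_def by simp
    moreover have "card {j. j < n \<and> X j > X_ord n X ?k} < ?k"
      using desc_gt[OF p(1) p(2), of X] unfolding X_ord_def by simp
    ultimately show False by linarith
  qed
  then show ?thesis using p(3) by linarith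
qed

lemma bh_contains:
  assumes anti: "\<And>x y. x \<le> y \<Longrightarrow> \<Psi> y \<le> \<Psi> x"
    and k: "k = card {j. j < n \<and> t \<le> X j}" "1 \<le> k"
    and thr: "\<Psi> t \<le> real k * q / real n"
  shows "{j. j < n \<and> t \<le> X j} \<subseteq> BH_rej \<Psi> q n X" "k \<le> BH_index \<Psi> q n X"
    "BH_index \<Psi> q n X \<noteq> 0"
proof -
  have kn: "k \<le> n" using k card_mono[of "{..<n}" "{j. j < n \<and> t \<le> X j}"] by auto
  have "P_ord \<Psi> n X k \<le> \<Psi> t"
  proof (rule ccontr)
    assume c: "\<not> ?thesis"
    have "{j. j < n \<and> t \<le> X j} \<subseteq> {j. j < n \<and> \<Psi> (X j) < P_ord \<Psi> n X k}"
      using c anti by fastforce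
    then have "card {j. j < n \<and> t \<le> X j} \<le> card {j. j < n \<and> \<Psi> (X j) < P_ord \<Psi> n X k}"
      by (intro card_mono) auto
    then have "k \<le> card {j. j < n \<and> \<Psi> (X j) < P_ord \<Psi> n X k}" using k by simp
    moreover have "card {j. j < n \<and> \<Psi> (X j) < P_ord \<Psi> n X k} < k"
      using asc_lt[OF k(2) kn, of "\<lambda>i. \<Psi> (X i)"] unfolding P_ord_def by simp
    ultimately show False by linarith
  qed
  then have pk: "P_ord \<Psi> n X k \<le> real k * q / real n" using thr by linarith
  note g = bh_ge[OF k(2) kn pk]
  show "k \<le> BH_index \<Psi> q n X" "BH_index \<Psi> q n X \<noteq> 0" using g by auto
  let ?k = "BH_index \<Psi> q n X"
  note p = bh_props[OF g(2)]
  show "{j. j < n \<and> t \<le> X j} \<subseteq> BH_rej \<Psi> q n X"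
  proof
    fix i assume "i \<in> {j. j < n \<and> t \<le> X j}"
    then have i: "i < n" "t \<le> X i" by auto
    have "X_ord n X ?k \<le> X i"
    proof (rule ccontr)
      assume c: "\<not> ?thesis"
      have "{j. j < n \<and> X j \<ge> X_ord n X ?k} \<subseteq> {j. j < n \<and> t \<le> X j} - {i}"
        using c i by auto
      then have "card {j. j < n \<and> X j \<ge> X_ord n X ?k} \<le> card ({j. j < n \<and> t \<le> X j} - {i})"
        by (intro card_mono) auto
      also have "\<dots> = k - 1" using i k by (simp add: card_Diff_singleton)
      finally have "card {j. j < n \<and> X j \<ge> X_ord n X ?k} \<le> k - 1" .
      moreover have "card {j. j < n \<and> X j \<ge> X_ord n X ?k} \<ge> ?k"
        using desc_ge[OF p(1) p(2), of X] unfolding X_ord_def by simp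
      ultimately show False using g k by linarith
    qed
    then show "i \<in> BH_rej \<Psi> q n X" using bh_rej_eq[OF g(2)] i by auto
  qed
qed


lemma det_main:
  fixes \<Psi> :: "real \<Rightarrow> real"
  assumes anti: "\<And>x y. x \<le> y \<Longrightarrow> \<Psi> y \<le> \<Psi> x"
    and F: "F \<subseteq> {..<n}" "card F = m" "1 \<le> m"
    and miss: "2 * card {i \<in> F. X i < t} \<le> m"
    and thr: "\<Psi> t \<le> real m * q / (2 * real n)" and q: "0 \<le> q"
  shows "FNP F (BH_rej \<Psi> q n X) \<le> real (card {i \<in> F. X i < t}) / real m"
    and "real m \<le> 2 * real (card (BH_rej \<Psi> q n X))"
    and "\<And>c. 1 \<le> c \<Longrightarrow> \<not> (\<exists>v\<in>{c..n}. v \<le> card {j. j < n \<and> j \<notin> F \<and> \<Psi> (X j) \<le> real (m + v) * q / real n})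
          \<Longrightarrow> FDP F (BH_rej \<Psi> q n X) \<le> 2 * (real c - 1) / real m"
proof -
  let ?R = "BH_rej \<Psi> q n X"
  let ?k = "card {j. j < n \<and> t \<le> X j}"
  let ?mi = "card {i \<in> F. X i < t}"
  have finF: "finite F" using F(1) finite_subset by blast
  have "m \<le> n" using F card_mono[of "{..<n}" F] by simp
  then have n0: "0 < n" using F(3) by linarith
  have split: "F = {i \<in> F. X i < t} \<union> {i \<in> F. t \<le> X i}" by auto
  have "m = ?mi + card {i \<in> F. t \<le> X i}"
    using F(2) finF by (subst F(2)[symmetric], subst split) (subst card_Un_disjoint, auto)
  moreover have "card {i \<in> F. t \<le> X i} \<le> ?k" using F(1) by (intro card_mono) auto
  ultimately have mk: "real m \<le> 2 * real ?k" using miss by linarith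
  have k1: "1 \<le> ?k" using mk F(3) by linarith
  have "\<Psi> t \<le> real ?k * q / real n"
  proof -
    have "real m * q / (2 * real n) \<le> real ?k * q / real n"
    proof -
      have "real m * q \<le> (2 * real ?k) * q" using mk q by (rule mult_right_mono)
      then have "real m * q / (2 * real n) \<le> (2 * real ?k) * q / (2 * real n)"
        using n0 by (intro divide_right_mono) auto
      also have "\<dots> = real ?k * q / real n" by simp
      finally show ?thesis .
    qed
    then show ?thesis using thr by linarith
  qed
  note bc = bh_contains[where \<Psi>=\<Psi> and k="?k" and n=n and t=t and X=X and q=q, OF anti refl k1 this]
  have Rsub: "?R \<subseteq> {..<n}" by (rule bh_rej_sub)
  have cardR: "?k \<le> card ?R" using bc(2) bh_card[OF bc(3)] by linarith
  show mR: "real m \<le> 2 * real (card ?R)" using mk cardR by linarith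
  have "F - ?R \<subseteq> {i \<in> F. X i < t}" using bc(1) F(1) by force
  then have "card (F - ?R) \<le> ?mi" using finF by (intro card_mono) auto
  then show "FNP F ?R \<le> real ?mi / real m" unfolding FNP_def using F(2) by (simp add: divide_right_mono)
  fix c :: nat assume c1: "1 \<le> c"
    and nH: "\<not> (\<exists>v\<in>{c..n}. v \<le> card {j. j < n \<and> j \<notin> F \<and> \<Psi> (X j) \<le> real (m + v) * q / real n})"
  let ?V = "card (?R - F)"
  have finR: "finite ?R" using Rsub finite_subset by blast
  have "?R \<subseteq> F \<union> (?R - F)" by auto
  then have "card ?R \<le> card (F \<union> (?R - F))" using finF finR by (intro card_mono) auto
  also have "\<dots> \<le> card F + ?V" by (rule card_Un_le)
  finally have "card ?R \<le> card F + ?V" .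
  then have RmV: "card ?R \<le> m + ?V" using F(2) by simp
  have "?R - F \<subseteq> {j. j < n \<and> j \<notin> F \<and> \<Psi> (X j) \<le> real (m + ?V) * q / real n}"
  proof
    fix j assume j: "j \<in> ?R - F"
    have "\<Psi> (X j) \<le> real (BH_index \<Psi> q n X) * q / real n" using bh_rej_pval[OF anti bc(3)] j by auto
    also have "\<dots> \<le> real (m + ?V) * q / real n"
      using bh_card[OF bc(3)] RmV q n0 by (intro divide_right_mono mult_right_mono) auto
    finally show "j \<in> {j. j < n \<and> j \<notin> F \<and> \<Psi> (X j) \<le> real (m + ?V) * q / real n}" using j Rsub by auto
  qed
  then have VN: "?V \<le> card {j. j < n \<and> j \<notin> F \<and> \<Psi> (X j) \<le> real (m + ?V) * q / real n}"
    by (intro card_mono) auto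
  have "?R - F \<subseteq> {..<n}" using Rsub by auto
  then have Vn: "?V \<le> n" using card_mono[of "{..<n}" "?R - F"] by simp
  have "\<not> c \<le> ?V" using nH VN Vn by auto
  then have Vc: "real ?V \<le> real c - 1" by linarith
  have Rpos: "0 < real (card ?R)" using mR F(3) by linarith
  have "FDP F ?R = real ?V / real (card ?R)" unfolding FDP_def by simp
  also have "\<dots> \<le> (real c - 1) / real (card ?R)" using Vc Rpos by (simp add: divide_right_mono)
  also have "\<dots> \<le> (real c - 1) / (real m / 2)" using Rpos mR c1 F(3)
    by (intro divide_left_mono) auto
  also have "(real c - 1) / (real m / 2) = 2 * (real c - 1) / real m" by simp
  finally show "FDP F ?R \<le> 2 * (real c - 1) / real m" .
qed


lemma PiM_emb_eq:
  assumes "S \<subseteq> I"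
  shows "prod_emb I M S (Pi\<^sub>E S E) = {x \<in> space (PiM I M). \<forall>i\<in>S. x i \<in> E i}"
  using assms by (auto simp: prod_emb_def space_PiM PiE_iff extensional_def)

lemma union_bound_PiM:
  fixes M :: "'i \<Rightarrow> 'a measure"
  assumes I: "finite I" and M: "\<And>i. i \<in> I \<Longrightarrow> prob_space (M i)" and J: "J \<subseteq> I"
    and E: "\<And>i. i \<in> J \<Longrightarrow> E i \<in> sets (M i)" and p: "\<And>i. i \<in> J \<Longrightarrow> measure (M i) (E i) \<le> p"
    and p0: "0 \<le> p"
  shows "measure (PiM I M) {x \<in> space (PiM I M). v \<le> card {i\<in>J. x i \<in> E i}} \<le> real (card J choose v) * p ^ v"
proof -
  let ?P = "PiM I M"
  let ?SS = "{S. S \<subseteq> J \<and> card S = v}"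
  let ?A = "\<lambda>S. prod_emb I M S (Pi\<^sub>E S E)"
  have finJ: "finite J" using I J finite_subset by blast
  have "prob_space ?P" using M by (intro prob_space_PiM) auto
  then interpret P: prob_space ?P .
  have sub: "{x \<in> space ?P. v \<le> card {i\<in>J. x i \<in> E i}} \<subseteq> (\<Union>S\<in>?SS. ?A S)"
  proof
    fix x assume x: "x \<in> {x \<in> space ?P. v \<le> card {i\<in>J. x i \<in> E i}}"
    then obtain S where S: "S \<subseteq> {i\<in>J. x i \<in> E i}" "card S = v" "finite S"
      by (auto elim: obtain_subset_with_card_n)
    then have "x \<in> ?A S" using x J by (subst PiM_emb_eq) auto
    then show "x \<in> (\<Union>S\<in>?SS. ?A S)" using S by auto
  qed
  have AS: "?A S \<in> sets ?P" if "S \<in> ?SS" for S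
    using that finJ J E by (intro sets_PiM_I) (auto intro: finite_subset)
  have finSS: "finite ?SS" using finJ by auto
  have "measure ?P {x \<in> space ?P. v \<le> card {i\<in>J. x i \<in> E i}} \<le> measure ?P (\<Union>S\<in>?SS. ?A S)"
    using sub AS finSS by (intro P.finite_measure_mono) auto
  also have "\<dots> \<le> (\<Sum>S\<in>?SS. measure ?P (?A S))"
    using AS finSS by (intro measure_UNION_le) auto
  also have "\<dots> \<le> (\<Sum>S\<in>?SS. p ^ v)"
  proof (rule sum_mono)
    fix S assume S: "S \<in> ?SS"
    then have SJ: "S \<subseteq> J" "finite S" "card S = v" using finJ by (auto intro: finite_subset)
    have "emeasure ?P (?A S) = (\<Prod>i\<in>S. emeasure (M i) (E i))"
      using SJ J E M by (intro emeasure_PiM_emb) auto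
    also have "\<dots> = (\<Prod>i\<in>S. ennreal (measure (M i) (E i)))"
      using SJ J M by (intro prod.cong refl) (simp add: subset_iff finite_measure.emeasure_eq_measure prob_space_def)
    also have "\<dots> = ennreal (\<Prod>i\<in>S. measure (M i) (E i))"
      by (rule prod_ennreal) auto
    finally have "ennreal (measure ?P (?A S)) = ennreal (\<Prod>i\<in>S. measure (M i) (E i))"
      by (simp add: P.emeasure_eq_measure)
    then have "measure ?P (?A S) = (\<Prod>i\<in>S. measure (M i) (E i))"
      by (rule ennreal_inj[THEN iffD1, rotated 2]) (auto intro: prod_nonneg)
    also have "\<dots> \<le> (\<Prod>i\<in>S. p)"
      using SJ p by (intro prod_mono) auto
    also have "\<dots> = p ^ v" using SJ by simp
    finally show "measure ?P (?A S) \<le> p ^ v" .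
  qed
  also have "\<dots> = real (card J choose v) * p ^ v" using n_subsets[OF finJ, of v] by simp
  finally show ?thesis .
qed

definition Qm :: "real measure \<Rightarrow> nat \<Rightarrow> nat set \<Rightarrow> real \<Rightarrow> (nat \<Rightarrow> real) measure" where
  "Qm D n F \<mu> = PiM {..<n} (\<lambda>i. distr D borel (\<lambda>x. x + (if i \<in> F then \<mu> else 0)))"

lemma Qm_prob: "prob_space D \<Longrightarrow> sets D = sets borel \<Longrightarrow> prob_space (Qm D n F \<mu>)"
proof -
  assume D: "prob_space D" and sD: "sets D = sets borel"
  have "(\<lambda>x. x + c) \<in> borel_measurable D" for c :: real
    by (subst measurable_cong_sets[OF sD refl]) simp
  then show ?thesis
    unfolding Qm_def using D by (intro prob_space_PiM prob_space.prob_space_distr) auto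
qed

lemma Qm_sets: "sets (Qm D n F \<mu>) = sets (PiM {..<n} (\<lambda>_. borel))"
  unfolding Qm_def by (intro sets_PiM_cong) auto

lemma Qm_space: "space (Qm D n F \<mu>) = space (PiM {..<n} (\<lambda>_. borel :: real measure))"
  using Qm_sets by (rule sets_eq_imp_space_eq)

lemma model_facts:
  fixes D :: "real measure"
  assumes D: "prob_space D" and sD: "sets D = sets borel" and mn: "m \<le> n"
  defines "S \<equiv> {A. A \<subseteq> {..<n} \<and> card A = m}"
  defines "\<Omega> \<equiv> count_space (Pow {..<n}) \<Otimes>\<^sub>M PiM {..<n} (\<lambda>_. borel :: real measure)"
  shows "sparse_model D n m \<mu> = bind (uniform_count_measure S) (\<lambda>F. distr (Qm D n F \<mu>) \<Omega> (\<lambda>x. (F, x)))"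
    and "(\<lambda>F. distr (Qm D n F \<mu>) \<Omega> (\<lambda>x. (F, x))) \<in> measurable (uniform_count_measure S) (subprob_algebra \<Omega>)"
    and "S \<noteq> {}" "finite S"
    and "sets (sparse_model D n m \<mu>) = sets \<Omega>" "space (sparse_model D n m \<mu>) = space \<Omega>"
    and "prob_space (sparse_model D n m \<mu>)"
proof -
  show eq: "sparse_model D n m \<mu> = bind (uniform_count_measure S) (\<lambda>F. distr (Qm D n F \<mu>) \<Omega> (\<lambda>x. (F, x)))"
    unfolding sparse_model_def S_def \<Omega>_def Qm_def by simp
  obtain T where "T \<subseteq> {..<n}" "card T = m" using mn by (metis card_lessThan obtain_subset_with_card_n)
  then show ne: "S \<noteq> {}" unfolding S_def by auto
  show fin: "finite S" unfolding S_def by simp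
  have mf: "(\<lambda>x. (F, x)) \<in> measurable (Qm D n F \<mu>) \<Omega>" if "F \<in> S" for F
    unfolding \<Omega>_def using that unfolding S_def
    by (intro measurable_Pair measurable_const measurable_ident_sets Qm_sets) auto
  have ps: "prob_space (distr (Qm D n F \<mu>) \<Omega> (\<lambda>x. (F, x)))" if "F \<in> S" for F
    using mf[OF that] by (intro prob_space.prob_space_distr Qm_prob D sD)
  show K: "(\<lambda>F. distr (Qm D n F \<mu>) \<Omega> (\<lambda>x. (F, x))) \<in> measurable (uniform_count_measure S) (subprob_algebra \<Omega>)"
    using ps by (subst measurable_cong_sets[OF sets_uniform_count_measure_count_space refl])
      (auto simp: space_subprob_algebra intro: prob_space_imp_subprob_space)
  show sets: "sets (sparse_model D n m \<mu>) = sets \<Omega>" unfolding eq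
    using ne by (subst sets_bind) (auto simp: space_uniform_count_measure)
  then show "space (sparse_model D n m \<mu>) = space \<Omega>" by (rule sets_eq_imp_space_eq)
  show "prob_space (sparse_model D n m \<mu>)" unfolding eq
  proof (rule prob_space_bind'[where M="uniform_count_measure S"])
    show "uniform_count_measure S \<in> space (prob_algebra (uniform_count_measure S))"
      using ne fin by (simp add: space_prob_algebra prob_space_uniform_count_measure)
    show "(\<lambda>F. distr (Qm D n F \<mu>) \<Omega> (\<lambda>x. (F, x))) \<in> uniform_count_measure S \<rightarrow>\<^sub>M prob_algebra \<Omega>"
      using ps by (subst measurable_cong_sets[OF sets_uniform_count_measure_count_space refl])
        (auto simp: space_prob_algebra)
  qed
qed

lemma model_measure_bound:
  fixes D :: "real measure" and P :: "nat set \<times> (nat \<Rightarrow> real) \<Rightarrow> bool"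
  assumes D: "prob_space D" and sD: "sets D = sets borel" and mn: "m \<le> n"
    and b: "0 \<le> b"
    and B: "\<And>F. F \<subseteq> {..<n} \<Longrightarrow> card F = m \<Longrightarrow> B F \<in> sets (PiM {..<n} (\<lambda>_. borel :: real measure))"
    and Bb: "\<And>F. F \<subseteq> {..<n} \<Longrightarrow> card F = m \<Longrightarrow> measure (Qm D n F \<mu>) (B F) \<le> b"
    and sub: "\<And>F X. F \<subseteq> {..<n} \<Longrightarrow> card F = m \<Longrightarrow> X \<in> space (PiM {..<n} (\<lambda>_. borel :: real measure)) \<Longrightarrow> P (F, X) \<Longrightarrow> X \<in> B F"
  shows "\<exists>A\<in>sets (sparse_model D n m \<mu>). {\<omega> \<in> space (sparse_model D n m \<mu>). P \<omega>} \<subseteq> A \<and> measure (sparse_model D n m \<mu>) A \<le> b"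
proof -
  define S where "S = {A. A \<subseteq> {..<n} \<and> card A = m}"
  define \<Omega> where "\<Omega> = count_space (Pow {..<n}) \<Otimes>\<^sub>M PiM {..<n} (\<lambda>_. borel :: real measure)"
  define K where "K = (\<lambda>F. distr (Qm D n F \<mu>) \<Omega> (\<lambda>x. (F, x)))"
  let ?M = "sparse_model D n m \<mu>"
  let ?PS = "space (PiM {..<n} (\<lambda>_. borel :: real measure))"
  note mf = model_facts[OF D sD mn, folded S_def \<Omega>_def, folded K_def]
  interpret M: prob_space ?M by (rule mf(7))
  define A where "A = (\<Union>F\<in>S. {F} \<times> B F) \<union> ((Pow {..<n} - S) \<times> ?PS)"
  have BS: "B F \<in> sets (PiM {..<n} (\<lambda>_. borel :: real measure))" if "F \<in> S" for F
    using that B unfolding S_def by auto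
  have A: "A \<in> sets \<Omega>" unfolding A_def \<Omega>_def
    using mf(4) BS by (intro sets.Un sets.finite_UN pair_measureI) (auto simp: S_def)
  have AM: "A \<in> sets ?M" using A mf(5) by simp
  have tsub: "{\<omega> \<in> space ?M. P \<omega>} \<subseteq> A"
  proof
    fix \<omega> assume w: "\<omega> \<in> {\<omega> \<in> space ?M. P \<omega>}"
    obtain F X where FX: "\<omega> = (F, X)" by (cases \<omega>)
    have "F \<in> Pow {..<n}" "X \<in> ?PS" using w mf(6) FX unfolding \<Omega>_def by (auto simp: space_pair_measure)
    then show "\<omega> \<in> A" using sub[of F X] w FX unfolding A_def S_def by auto
  qed
  have "measure ?M A \<le> b"
  proof -
    have "emeasure ?M A = (\<integral>\<^sup>+F. emeasure (K F) A \<partial>uniform_count_measure S)"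
      unfolding mf(1) K_def using mf(2,3) A by (intro emeasure_bind) (auto simp: space_uniform_count_measure)
    also have "\<dots> \<le> (\<integral>\<^sup>+F. ennreal b \<partial>uniform_count_measure S)"
    proof (rule nn_integral_mono)
      fix F assume F: "F \<in> space (uniform_count_measure S)"
      then have FS: "F \<in> S" by (simp add: space_uniform_count_measure)
      have mfF: "(\<lambda>x. (F, x)) \<in> measurable (Qm D n F \<mu>) \<Omega>"
        unfolding \<Omega>_def using FS unfolding S_def
        by (intro measurable_Pair measurable_const measurable_ident_sets Qm_sets) auto
      have pre: "(\<lambda>x. (F, x)) -` A \<inter> space (Qm D n F \<mu>) = B F"
      proof -
        have "B F \<subseteq> ?PS" using BS[OF FS] sets.sets_into_space by blast
        then show ?thesis using FS unfolding A_def Qm_space by auto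
      qed
      have "emeasure (K F) A = emeasure (Qm D n F \<mu>) (B F)"
        unfolding K_def using mfF A by (subst emeasure_distr) (auto simp: pre)
      also have "\<dots> = ennreal (measure (Qm D n F \<mu>) (B F))"
        using Qm_prob[OF D sD] by (simp add: finite_measure.emeasure_eq_measure prob_space_def)
      also have "\<dots> \<le> ennreal b" using Bb FS unfolding S_def by (simp add: ennreal_leI)
      finally show "emeasure (K F) A \<le> ennreal b" .
    qed
    also have "\<dots> = ennreal b"
      using prob_space.emeasure_space_1[OF prob_space_uniform_count_measure[OF mf(4,3)]] by simp
    finally have "ennreal (measure ?M A) \<le> ennreal b" by (simp add: M.emeasure_eq_measure)
    then show ?thesis using b by simp
  qed
  then show ?thesis using AM tsub by blast
qed

lemma measure_bound_from_set:
  assumes "prob_space M" "A \<in> sets M" "{\<omega> \<in> space M. P \<omega>} \<subseteq> A"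
  shows "measure M {\<omega> \<in> space M. P \<omega>} \<le> measure M A"
proof (cases "{\<omega> \<in> space M. P \<omega>} \<in> sets M")
  case True then show ?thesis using assms by (intro finite_measure.finite_measure_mono) (auto simp: prob_space_def)
next
  case False then show ?thesis by (simp add: measure_notin_sets)
qed

lemma integral_bound_from_set:
  fixes f :: "'a \<Rightarrow> real"
  assumes M: "prob_space M" and A: "A \<in> sets M" "{\<omega> \<in> space M. P \<omega>} \<subseteq> A"
    and d: "0 \<le> d" and f: "\<And>\<omega>. \<omega> \<in> space M \<Longrightarrow> f \<omega> \<le> 1"
    and g: "\<And>\<omega>. \<omega> \<in> space M \<Longrightarrow> \<not> P \<omega> \<Longrightarrow> f \<omega> \<le> d"
  shows "(\<integral>\<omega>. f \<omega> \<partial>M) \<le> d + measure M A"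
proof -
  interpret prob_space M by (rule M)
  have int: "integrable M (\<lambda>\<omega>. d + indicator A \<omega>)"
    using A(1) by (intro Bochner_Integration.integrable_add integrable_const integrable_real_indicator) (auto simp: emeasure_eq_measure)
  have "(\<integral>\<omega>. d + indicator A \<omega> \<partial>M) = d + measure M A"
    using A(1) by (subst Bochner_Integration.integral_add) (auto intro!: integrable_real_indicator simp: emeasure_eq_measure prob_space)
  moreover have "(\<integral>\<omega>. f \<omega> \<partial>M) \<le> (\<integral>\<omega>. d + indicator A \<omega> \<partial>M)"
  proof (cases "integrable M f")
    case True
    show ?thesis
    proof (rule integral_mono[OF True int])
      fix \<omega> assume w: "\<omega> \<in> space M"
      show "f \<omega> \<le> d + indicator A \<omega>"
      proof (cases "P \<omega>")
        case True then have "\<omega> \<in> A" using A w by auto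
        then show ?thesis using f[OF w] d by simp
      next
        case False then show ?thesis using g[OF w] by (simp add: indicator_def)
      qed
    qed
  next
    case False
    then have "(\<integral>\<omega>. f \<omega> \<partial>M) = 0" by (rule not_integrable_integral_eq)
    moreover have "0 \<le> (\<integral>\<omega>. d + indicator A \<omega> \<partial>M)" using d by (intro Bochner_Integration.integral_nonneg) (simp add: indicator_def)
    ultimately show ?thesis by simp
  qed
  ultimately show ?thesis by simp
qed


context
  fixes D :: "real measure" and \<Psi> :: "real \<Rightarrow> real"
  assumes D: "prob_space D" and sD: "sets D = sets borel" and Psi: "\<forall>y. \<Psi> y = measure D {y..}"
begin

interpretation PD: prob_space D by (rule D)

lemma spD: "space D = UNIV" using sets_eq_imp_space_eq[OF sD] by simp

lemma Psi_anti: "x \<le> y \<Longrightarrow> \<Psi> y \<le> \<Psi> x"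
  using Psi sD by (auto intro!: PD.finite_measure_mono)

lemma Psi_le1: "\<Psi> y \<le> 1" using Psi by simp

lemma Psi_to_1: "(\<lambda>k::nat. \<Psi> (- real k)) \<longlonglongrightarrow> 1"
proof -
  have r: "range (\<lambda>k::nat. {- real k..}) \<subseteq> sets D" unfolding sD by (intro image_subsetI) simp
  have i: "incseq (\<lambda>k::nat. {- real k..})" by (rule monoI) auto
  note lim = PD.finite_Lim_measure_incseq[OF r i]
  have U: "(\<Union>k::nat. {- real k..}) = UNIV"
  proof (rule set_eqI, rule iffI)
    fix x :: real
    obtain k :: nat where "-x \<le> real k" using real_arch_simple by blast
    then show "x \<in> (\<Union>k::nat. {- real k..})" by (intro UN_I[of k]) auto
  qed simp
  have one: "measure D UNIV = 1" using PD.prob_space unfolding spD .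
  have "(\<lambda>k::nat. \<Psi> (- real k)) = (\<lambda>k::nat. measure D {- real k..})" by (rule ext) (simp add: Psi)
  then show ?thesis using lim unfolding U one by simp
qed

lemma null_bound:
  assumes cont: "continuous_on UNIV \<Psi>" and u: "0 \<le> u"
  shows "measure D {x. \<Psi> x \<le> u} \<le> u"
proof -
  let ?A = "{x. \<Psi> x \<le> u}"
  have cl: "closed ?A" using cont by (intro closed_Collect_le continuous_on_const) auto
  show ?thesis
  proof (cases "?A = {}")
    case True then show ?thesis using u by simp
  next
    case ne: False
    show ?thesis
    proof (cases "bdd_below ?A")
      case True
      let ?a = "Inf ?A"
      have a: "?a \<in> ?A" using closed_contains_Inf[OF ne True cl] .
      have "?A = {?a..}"
      proof safe
        fix x assume "\<Psi> x \<le> u" then show "?a \<le> x" using True by (intro cInf_lower) auto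
      next
        fix x assume "?a \<le> x" then show "\<Psi> x \<le> u" using a Psi_anti[of ?a x] by auto
      qed
      then show ?thesis using a Psi by simp
    next
      case False
      have all: "\<Psi> y \<le> u" for y
      proof -
        obtain x where "x \<in> ?A" "x \<le> y" using False unfolding bdd_below_def by (metis linorder_not_le order.strict_implies_order)
        then show ?thesis using Psi_anti[of x y] by auto
      qed
      have "1 \<le> u" using Psi_to_1 all by (intro LIMSEQ_le_const2) auto
      then show ?thesis using PD.prob_le_1[of "{x. \<Psi> x \<le> u}"] by linarith
    qed
  qed
qed

lemma left_tail:
  assumes e: "0 < e" shows "\<exists>K. \<forall>x\<le>K. measure D {..<x} \<le> e"
proof -
  have "(\<lambda>k::nat. measure D {..< - real k}) \<longlonglongrightarrow> measure D (\<Inter>k. {..< - real k})"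
  proof (rule PD.finite_Lim_measure_decseq)
    show "range (\<lambda>k::nat. {..< - real k}) \<subseteq> sets D" unfolding sD by (intro image_subsetI) simp
    show "decseq (\<lambda>k::nat. {..< - real k})" by (rule antimonoI) auto
  qed
  moreover have "(\<Inter>k::nat. {..< - real k}) = {}"
  proof safe
    fix x :: real assume x: "x \<in> (\<Inter>k::nat. {..< - real k})"
    obtain k :: nat where "-x \<le> real k" using real_arch_simple by blast
    moreover have "x < - real k" using x by blast
    ultimately show "x \<in> {}" by linarith
  qed
  ultimately have "(\<lambda>k::nat. measure D {..< - real k}) \<longlonglongrightarrow> 0" by simp
  from order_tendstoD(2)[OF this e] obtain k where k: "measure D {..< - real k} < e"
    unfolding eventually_sequentially by blast
  show ?thesis
  proof (intro exI allI impI)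
    fix x assume "x \<le> - real k"
    then have "measure D {..<x} \<le> measure D {..< - real k}" unfolding sD by (intro PD.finite_measure_mono) (auto simp: sD)
    then show "measure D {..<x} \<le> e" using k by simp
  qed
qed

end


lemma choose_fact_le: "real (N choose v) * fact v \<le> real N ^ v"
proof (cases "v \<le> N")
  case True
  have e: "fact v * fact (N - v) * (N choose v) = (fact N :: nat)" by (rule binomial_fact_lemma[OF True])
  have "(fact N :: nat) div fact (N - v) = fact v * (N choose v)"
    using e[symmetric] by (simp add: mult.commute mult.left_commute)
  then have "fact v * (N choose v) \<le> N ^ v" using fact_div_fact_le_pow[OF True] by simp
  then have "real (fact v * (N choose v)) \<le> real (N ^ v)" by (simp only: of_nat_le_iff)
  then show ?thesis by (simp add: mult.commute)
next
  case False then show ?thesis by (simp add: binomial_eq_0)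
qed

lemma pow_div_fact_le_exp: "real v ^ v / fact v \<le> exp (real v)"
proof -
  have s: "(\<lambda>n. real v ^ n /\<^sub>R fact n) sums exp (real v)" by (rule exp_converges)
  have "(\<Sum>n\<in>{v}. real v ^ n /\<^sub>R fact n) \<le> (\<Sum>n. real v ^ n /\<^sub>R fact n)"
    using s by (intro sum_le_suminf) (auto simp: sums_summable)
  then show ?thesis using sums_unique[OF s] by (simp add: divide_inverse mult.commute)
qed

lemma binom_bound:
  fixes x L :: real
  assumes x: "0 \<le> x" and L: "real N * x \<le> L * real v"
  shows "real (N choose v) * x ^ v \<le> (exp 1 * L) ^ v"
proof -
  have L0: "0 \<le> L * real v" using L x by (metis mult_nonneg_nonneg of_nat_0_le_iff order_trans)
  have "real (N choose v) * x ^ v = (real (N choose v) * fact v) * x ^ v / fact v" by simp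
  also have "\<dots> \<le> real N ^ v * x ^ v / fact v"
    by (intro divide_right_mono mult_right_mono choose_fact_le) (auto simp: x)
  also have "\<dots> = (real N * x) ^ v / fact v" by (simp add: power_mult_distrib)
  also have "\<dots> \<le> (L * real v) ^ v / fact v"
    by (intro divide_right_mono power_mono L) (auto simp: x)
  also have "\<dots> = L ^ v * (real v ^ v / fact v)" by (simp add: power_mult_distrib)
  also have "\<dots> \<le> L ^ v * exp (real v)"
  proof (cases "v = 0")
    case True then show ?thesis by simp
  next
    case False
    then have "0 \<le> L" using L0 by (simp add: zero_le_mult_iff)
    then show ?thesis by (intro mult_left_mono pow_div_fact_le_exp) auto
  qed
  also have "\<dots> = (exp 1 * L) ^ v" by (simp add: power_mult_distrib exp_of_nat_mult[symmetric] mult.commute)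
  finally show ?thesis .
qed

lemma pow_le_self: "0 \<le> (y::real) \<Longrightarrow> y \<le> 1 \<Longrightarrow> 1 \<le> v \<Longrightarrow> y ^ v \<le> y"
  by (metis One_nat_def power_decreasing power_one_right)

lemma geom_bound:
  fixes y :: real
  assumes y: "0 \<le> y" "y \<le> 1/2" and c: "1 \<le> c"
  shows "(\<Sum>v\<in>{c..n}. y ^ v) \<le> 2 * y"
proof -
  have "(\<Sum>v\<in>{c..n}. y ^ v) \<le> (\<Sum>v\<in>{1..n}. y ^ v)"
    using c y by (intro sum_mono2) auto
  also have "\<dots> \<le> (\<Sum>v<n. y * y ^ v)"
  proof -
    have "(\<Sum>v\<in>{1..n}. y ^ v) = (\<Sum>v<n. y ^ Suc v)"
      by (rule sum.reindex_bij_witness[where i=Suc and j="\<lambda>v. v - 1"]) auto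
    then show ?thesis by simp
  qed
  also have "\<dots> = y * ((1 - y ^ n) / (1 - y))" using y by (simp add: sum_distrib_left[symmetric] sum_gp_strict)
  also have "\<dots> \<le> y * (1 / (1 - y))"
    using y by (intro mult_left_mono divide_right_mono) auto
  also have "\<dots> \<le> y * 2" using y by (intro mult_left_mono) (auto simp: field_simps)
  finally show ?thesis by simp
qed


lemma card_as_sum:
  assumes "finite J"
  shows "real (card {i\<in>J. X i \<in> E i}) = (\<Sum>i\<in>J. indicator (E i) (X i))"
proof -
  have "real (card {i\<in>J. X i \<in> E i}) = (\<Sum>i\<in>{i\<in>J. X i \<in> E i}. 1)" by simp
  also have "\<dots> = (\<Sum>i\<in>J. if X i \<in> E i then 1 else 0)" using assms by (rule sum.inter_filter)
  also have "\<dots> = (\<Sum>i\<in>J. indicator (E i) (X i))" by (intro sum.cong refl) (simp add: indicator_def)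
  finally show ?thesis .
qed

lemma count_meas:
  fixes E :: "nat \<Rightarrow> real set"
  assumes J: "finite J" "J \<subseteq> I" and E: "\<And>i. i \<in> J \<Longrightarrow> E i \<in> sets borel"
  shows "{X \<in> space (PiM I (\<lambda>_. borel::real measure)). v \<le> card {i\<in>J. X i \<in> E i}} \<in> sets (PiM I (\<lambda>_. borel))"
proof -
  let ?f = "\<lambda>X. (\<Sum>i\<in>J. indicator (E i) (X i)) :: real"
  have f: "?f \<in> borel_measurable (PiM I (\<lambda>_. borel::real measure))"
  proof (rule borel_measurable_sum)
    fix i assume i: "i \<in> J"
    show "(\<lambda>X. indicator (E i) (X i) :: real) \<in> borel_measurable (PiM I (\<lambda>_. borel::real measure))"
      using i J E by (intro measurable_compose[OF measurable_component_singleton borel_measurable_indicator]) auto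
  qed
  have "{X \<in> space (PiM I (\<lambda>_. borel::real measure)). v \<le> card {i\<in>J. X i \<in> E i}}
        = ?f -` {real v..} \<inter> space (PiM I (\<lambda>_. borel::real measure))"
  proof (rule set_eqI)
    fix X
    show "X \<in> {X \<in> space (PiM I (\<lambda>_. borel::real measure)). v \<le> card {i\<in>J. X i \<in> E i}} \<longleftrightarrow>
      X \<in> ?f -` {real v..} \<inter> space (PiM I (\<lambda>_. borel::real measure))"
      using card_as_sum[OF J(1), of X E] by (metis (no_types, lifting) Int_iff atLeast_iff mem_Collect_eq of_nat_le_iff vimage_eq)
  qed
  also have "\<dots> \<in> sets (PiM I (\<lambda>_. borel))" by (rule measurable_sets[OF f]) simp
  finally show ?thesis .
qed

context
  fixes D :: "real measure" and \<Psi> :: "real \<Rightarrow> real"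
  assumes D: "prob_space D" and sD: "sets D = sets borel" and Psi: "\<forall>y. \<Psi> y = measure D {y..}"
    and cont: "continuous_on UNIV \<Psi>"
begin

lemma coord_measure:
  assumes "A \<in> sets borel"
  shows "measure (distr D borel (\<lambda>x. x + c)) A = measure D {x. x + c \<in> A}"
proof -
  have m: "(\<lambda>x. x + c) \<in> borel_measurable D"
    by (subst measurable_cong_sets[OF sD refl]) simp
  show ?thesis using measure_distr[OF m, of A] assms spD[OF D sD Psi] by (simp add: vimage_def)
qed

lemma miss_prob:
  assumes F: "F \<subseteq> {..<n}"
  shows "measure (Qm D n F \<mu>) {X \<in> space (Qm D n F \<mu>). v \<le> card {i\<in>F. X i \<in> {..<t}}}
     \<le> real (card F choose v) * measure D {..<t - \<mu>} ^ v"
  unfolding Qm_def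
proof (rule union_bound_PiM)
  show "prob_space (distr D borel (\<lambda>x. x + (if i \<in> F then \<mu> else 0)))" for i
    by (intro prob_space.prob_space_distr D) (subst measurable_cong_sets[OF sD refl]; simp)
  fix i assume i: "i \<in> F"
  show "{..<t} \<in> sets (distr D borel (\<lambda>x. x + (if i \<in> F then \<mu> else 0)))" by simp
  have "{x. x + \<mu> \<in> {..<t}} = {..<t - \<mu>}" by auto
  then show "measure (distr D borel (\<lambda>x. x + (if i \<in> F then \<mu> else 0))) {..<t} \<le> measure D {..<t - \<mu>}"
    using i coord_measure[of "{..<t}" \<mu>] by simp
qed (use F in \<open>auto simp: measure_nonneg\<close>)

lemma null_prob:
  assumes F: "F \<subseteq> {..<n}" and u: "0 \<le> u"
  shows "measure (Qm D n F \<mu>) {X \<in> space (Qm D n F \<mu>). v \<le> card {i\<in>{..<n} - F. X i \<in> {y. \<Psi> y \<le> u}}}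
     \<le> real (card ({..<n} - F) choose v) * u ^ v"
  unfolding Qm_def
proof (rule union_bound_PiM)
  show "prob_space (distr D borel (\<lambda>x. x + (if i \<in> F then \<mu> else 0)))" for i
    by (intro prob_space.prob_space_distr D) (subst measurable_cong_sets[OF sD refl]; simp)
  have Pm: "\<Psi> \<in> borel_measurable borel" using cont by (rule borel_measurable_continuous_onI)
  then have Eb: "{y. \<Psi> y \<le> u} \<in> sets borel" by measurable
  fix i assume i: "i \<in> {..<n} - F"
  show "{y. \<Psi> y \<le> u} \<in> sets (distr D borel (\<lambda>x. x + (if i \<in> F then \<mu> else 0)))" using Eb by simp
  have "measure (distr D borel (\<lambda>x. x + (if i \<in> F then \<mu> else 0))) {y. \<Psi> y \<le> u} = measure D {x. \<Psi> x \<le> u}"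
    using i coord_measure[OF Eb, of 0] by simp
  also have "\<dots> \<le> u" by (rule null_bound[OF D sD Psi cont u])
  finally show "measure (distr D borel (\<lambda>x. x + (if i \<in> F then \<mu> else 0))) {y. \<Psi> y \<le> u} \<le> u" .
qed (use u in auto)

end


context
  fixes D :: "real measure" and \<Psi> :: "real \<Rightarrow> real"
  assumes D: "prob_space D" and sD: "sets D = sets borel" and Psi: "\<forall>y. \<Psi> y = measure D {y..}"
    and cont: "continuous_on UNIV \<Psi>"
begin

lemma Qm_measure_le1: "measure (Qm D n F \<mu>) A \<le> 1"
  using Qm_prob[OF D sD] by (simp add: prob_space.prob_le_1)

lemma per_n:
  fixes m n :: nat and q \<delta> t \<mu> :: real
  assumes m1: "1 \<le> m" and mn: "m \<le> n" and q: "0 \<le> q" and d: "0 < \<delta>" "\<delta> \<le> 1/2"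
    and thr: "\<Psi> t \<le> real m * q / (2 * real n)"
  defines "pm \<equiv> measure D {..<t - \<mu>}"
  shows "\<exists>A\<in>sets (sparse_model D n m \<mu>). {\<omega> \<in> space (sparse_model D n m \<mu>).
            \<not> (FNP (fst \<omega>) (BH_rej \<Psi> q n (snd \<omega>)) \<le> \<delta> \<and> FDP (fst \<omega>) (BH_rej \<Psi> q n (snd \<omega>)) \<le> \<delta>)} \<subseteq> A
         \<and> measure (sparse_model D n m \<mu>) A \<le> exp 1 * (pm / \<delta>) + 2 * (exp 1 * ((1 + 2 / \<delta>) * q))"
    and "\<exists>A\<in>sets (sparse_model D n m \<mu>). {\<omega> \<in> space (sparse_model D n m \<mu>).
            \<not> FNP (fst \<omega>) (BH_rej \<Psi> q n (snd \<omega>)) \<le> \<delta>} \<subseteq> A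
         \<and> measure (sparse_model D n m \<mu>) A \<le> exp 1 * (pm / \<delta>)"
proof -
  have anti: "\<And>x y. x \<le> y \<Longrightarrow> \<Psi> y \<le> \<Psi> x" by (rule Psi_anti[OF D sD Psi])
  have pm0: "0 \<le> pm" unfolding pm_def by simp
  define v1 where "v1 = nat \<lfloor>\<delta> * real m\<rfloor> + 1"
  define c where "c = nat \<lfloor>\<delta> * real m / 2\<rfloor> + 1"
  define PS where "PS = PiM {..<n} (\<lambda>_. borel :: real measure)"
  define MB where "MB = (\<lambda>F. {X \<in> space PS. v1 \<le> card {i\<in>F. X i \<in> {..<t}}})"
  define HBv where "HBv = (\<lambda>F v. {X \<in> space PS. v \<le> card {i\<in>{..<n} - F. X i \<in> {y. \<Psi> y \<le> real (m + v) * q / real n}}})"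
  define HB where "HB = (\<lambda>F. \<Union>v\<in>{c..n}. HBv F v)"
  have v1: "\<delta> * real m < real v1" "1 \<le> v1" unfolding v1_def using d
    by (auto simp: of_nat_nat) linarith
  have c: "\<delta> * real m / 2 < real c" "1 \<le> c" "real c - 1 \<le> \<delta> * real m / 2" unfolding c_def using d m1
    by (auto simp: of_nat_nat) linarith+
  have Pm: "\<Psi> \<in> borel_measurable borel" using cont by (rule borel_measurable_continuous_onI)
  have Eb: "{y. \<Psi> y \<le> u} \<in> sets borel" for u using Pm by measurable
  have MBs: "MB F \<in> sets PS" if "F \<subseteq> {..<n}" for F
    unfolding MB_def PS_def using that by (intro count_meas) (auto intro: finite_subset)
  have HBvs: "HBv F v \<in> sets PS" for F v
    unfolding HBv_def PS_def using Eb by (intro count_meas) auto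
  have HBs: "HB F \<in> sets PS" for F
    unfolding HB_def using HBvs by (intro sets.finite_UN) auto
  have spQ: "space (Qm D n F \<mu>) = space PS" for F unfolding PS_def by (rule Qm_space)
  have setsQ: "sets (Qm D n F \<mu>) = sets PS" for F unfolding PS_def by (rule Qm_sets)
  have MBb: "measure (Qm D n F \<mu>) (MB F) \<le> exp 1 * (pm / \<delta>)" if F: "F \<subseteq> {..<n}" "card F = m" for F
  proof -
    have "measure (Qm D n F \<mu>) (MB F) \<le> real (card F choose v1) * pm ^ v1"
      using miss_prob[OF D sD Psi cont F(1), of \<mu> v1 t] unfolding MB_def spQ pm_def .
    also have "\<dots> \<le> (exp 1 * (pm / \<delta>)) ^ v1"
    proof (rule binom_bound[OF pm0])
      have "real m \<le> real v1 / \<delta>" using v1 d by (simp add: field_simps)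
      then have "real m * pm \<le> real v1 / \<delta> * pm" using pm0 by (rule mult_right_mono)
      then show "real (card F) * pm \<le> pm / \<delta> * real v1" using F by (simp add: mult.commute)
    qed
    finally have b1: "measure (Qm D n F \<mu>) (MB F) \<le> (exp 1 * (pm / \<delta>)) ^ v1" .
    show ?thesis
    proof (cases "exp 1 * (pm / \<delta>) \<le> 1")
      case True
      then have "(exp 1 * (pm / \<delta>)) ^ v1 \<le> exp 1 * (pm / \<delta>)"
        using pm0 d v1 by (intro pow_le_self) auto
      then show ?thesis using b1 by linarith
    next
      case False then show ?thesis using Qm_measure_le1[of n F \<mu> "MB F"] by linarith
    qed
  qed
  let ?\<rho> = "exp 1 * ((1 + 2 / \<delta>) * q)"
  have rho0: "0 \<le> ?\<rho>" using q d by simp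
  have HBb: "measure (Qm D n F \<mu>) (HB F) \<le> 2 * ?\<rho>" if F: "F \<subseteq> {..<n}" "card F = m" for F
  proof (cases "?\<rho> \<le> 1/2")
    case False then show ?thesis using Qm_measure_le1[of n F \<mu> "HB F"] by linarith
  next
    case True
    have "measure (Qm D n F \<mu>) (HB F) \<le> (\<Sum>v\<in>{c..n}. measure (Qm D n F \<mu>) (HBv F v))"
      unfolding HB_def using HBvs setsQ by (intro measure_UNION_le) auto
    also have "\<dots> \<le> (\<Sum>v\<in>{c..n}. ?\<rho> ^ v)"
    proof (rule sum_mono)
      fix v assume v: "v \<in> {c..n}"
      have u0: "0 \<le> real (m + v) * q / real n" using q by simp
      have "measure (Qm D n F \<mu>) (HBv F v) \<le> real (card ({..<n} - F) choose v) * (real (m + v) * q / real n) ^ v"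
        using null_prob[OF D sD Psi cont F(1) u0, of \<mu> v] unfolding HBv_def spQ .
      also have "\<dots> \<le> ?\<rho> ^ v"
      proof (rule binom_bound[OF u0])
        have n0: "0 < real n" using m1 mn by simp
        have cardle: "real (card ({..<n} - F)) \<le> real n"
          using card_mono[of "{..<n}" "{..<n} - F"] by auto
        have "real (card ({..<n} - F)) * (real (m + v) * q / real n) \<le> real n * (real (m + v) * q / real n)"
          using cardle u0 by (rule mult_right_mono)
        also have "\<dots> = real (m + v) * q" using n0 by simp
        also have "\<dots> \<le> ((1 + 2 / \<delta>) * real v) * q"
        proof (rule mult_right_mono[OF _ q])
          have "real m \<le> 2 / \<delta> * real c" using c d by (simp add: field_simps)
          also have "\<dots> \<le> 2 / \<delta> * real v" using v d by (intro mult_left_mono) auto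
          finally show "real (m + v) \<le> (1 + 2 / \<delta>) * real v" by (simp add: algebra_simps)
        qed
        finally show "real (card ({..<n} - F)) * (real (m + v) * q / real n) \<le> (1 + 2 / \<delta>) * q * real v"
          by (simp add: mult_ac)
      qed
      finally show "measure (Qm D n F \<mu>) (HBv F v) \<le> ?\<rho> ^ v" by (simp add: mult_ac)
    qed
    also have "\<dots> \<le> 2 * ?\<rho>" using rho0 True c by (intro geom_bound) auto
    finally show ?thesis .
  qed
  have good: "FNP F (BH_rej \<Psi> q n X) \<le> \<delta> \<and> (X \<notin> HB F \<longrightarrow> FDP F (BH_rej \<Psi> q n X) \<le> \<delta>)"
    if F: "F \<subseteq> {..<n}" "card F = m" and X: "X \<in> space PS" "X \<notin> MB F" for F X
  proof -
    have "\<not> v1 \<le> card {i\<in>F. X i \<in> {..<t}}" using X unfolding MB_def by auto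
    then have mi: "card {i\<in>F. X i < t} < v1" by simp
    then have "card {i\<in>F. X i < t} \<le> nat \<lfloor>\<delta> * real m\<rfloor>" using v1_def by simp
    then have "real (card {i\<in>F. X i < t}) \<le> real (nat \<lfloor>\<delta> * real m\<rfloor>)" by (simp only: of_nat_le_iff)
    also have "\<dots> \<le> \<delta> * real m"
    proof -
      have x0: "0 \<le> \<delta> * real m" using d by simp
      then have "int (nat \<lfloor>\<delta> * real m\<rfloor>) = \<lfloor>\<delta> * real m\<rfloor>" by simp
      then have "real (nat \<lfloor>\<delta> * real m\<rfloor>) = real_of_int \<lfloor>\<delta> * real m\<rfloor>" by (metis of_int_of_nat_eq)
      then show ?thesis using of_int_floor_le[of "\<delta> * real m"] by linarith
    qed
    finally have mi2: "real (card {i\<in>F. X i < t}) \<le> \<delta> * real m" .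
    moreover have "\<delta> * real m \<le> (1/2) * real m" by (rule mult_right_mono[OF d(2)]) simp
    ultimately have "2 * real (card {i\<in>F. X i < t}) \<le> real m" by linarith
    then have mi3: "2 * card {i\<in>F. X i < t} \<le> m" by linarith
    note dm = det_main[where \<Psi>=\<Psi> and F=F and n=n and m=m and X=X and t=t and q=q, OF anti F m1 mi3 thr q]
    have "FNP F (BH_rej \<Psi> q n X) \<le> real (card {i\<in>F. X i < t}) / real m" by (rule dm(1))
    also have "\<dots> \<le> \<delta>" using mi2 m1 by (subst pos_divide_le_eq) (auto simp: mult.commute)
    finally have fnp: "FNP F (BH_rej \<Psi> q n X) \<le> \<delta>" .
    have "FDP F (BH_rej \<Psi> q n X) \<le> \<delta>" if nH: "X \<notin> HB F"
    proof -
      have nh: "\<not> (\<exists>v\<in>{c..n}. v \<le> card {j. j < n \<and> j \<notin> F \<and> \<Psi> (X j) \<le> real (m + v) * q / real n})"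
      proof
        assume "\<exists>v\<in>{c..n}. v \<le> card {j. j < n \<and> j \<notin> F \<and> \<Psi> (X j) \<le> real (m + v) * q / real n}"
        then obtain v where v: "v \<in> {c..n}" "v \<le> card {j. j < n \<and> j \<notin> F \<and> \<Psi> (X j) \<le> real (m + v) * q / real n}" by blast
        have "{j. j < n \<and> j \<notin> F \<and> \<Psi> (X j) \<le> real (m + v) * q / real n} = {i\<in>{..<n} - F. X i \<in> {y. \<Psi> y \<le> real (m + v) * q / real n}}" by auto
        then have "X \<in> HBv F v" unfolding HBv_def using X v by auto
        then show False using nH v unfolding HB_def by auto
      qed
      have "FDP F (BH_rej \<Psi> q n X) \<le> 2 * (real c - 1) / real m" by (rule dm(3)) (use c(2) nh in auto)
      also have "\<dots> \<le> \<delta>" using c(3) m1 by (subst pos_divide_le_eq) (auto simp: mult.commute)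
      finally show ?thesis .
    qed
    then show ?thesis using fnp by blast
  qed
  show "\<exists>A\<in>sets (sparse_model D n m \<mu>). {\<omega> \<in> space (sparse_model D n m \<mu>).
            \<not> (FNP (fst \<omega>) (BH_rej \<Psi> q n (snd \<omega>)) \<le> \<delta> \<and> FDP (fst \<omega>) (BH_rej \<Psi> q n (snd \<omega>)) \<le> \<delta>)} \<subseteq> A
         \<and> measure (sparse_model D n m \<mu>) A \<le> exp 1 * (pm / \<delta>) + 2 * (exp 1 * ((1 + 2 / \<delta>) * q))"
  proof (rule model_measure_bound[OF D sD mn, where B="\<lambda>F. MB F \<union> HB F"])
    show "0 \<le> exp 1 * (pm / \<delta>) + 2 * ?\<rho>" using pm0 d rho0 by simp
    fix F assume F: "F \<subseteq> {..<n}" "card F = m"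
    show "MB F \<union> HB F \<in> sets (PiM {..<n} (\<lambda>_. borel :: real measure))"
      using MBs[OF F(1)] HBs unfolding PS_def by auto
    have "measure (Qm D n F \<mu>) (MB F \<union> HB F) \<le> measure (Qm D n F \<mu>) (MB F) + measure (Qm D n F \<mu>) (HB F)"
      using MBs[OF F(1)] HBs setsQ by (intro measure_Un_le) auto
    then show "measure (Qm D n F \<mu>) (MB F \<union> HB F) \<le> exp 1 * (pm / \<delta>) + 2 * ?\<rho>"
      using MBb[OF F] HBb[OF F] by linarith
    fix X assume X: "X \<in> space (PiM {..<n} (\<lambda>_. borel :: real measure))"
      and P: "\<not> (FNP (fst (F, X)) (BH_rej \<Psi> q n (snd (F, X))) \<le> \<delta> \<and> FDP (fst (F, X)) (BH_rej \<Psi> q n (snd (F, X))) \<le> \<delta>)"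
    show "X \<in> MB F \<union> HB F" using good[OF F, of X] X P unfolding PS_def by auto
  qed
  show "\<exists>A\<in>sets (sparse_model D n m \<mu>). {\<omega> \<in> space (sparse_model D n m \<mu>).
            \<not> FNP (fst \<omega>) (BH_rej \<Psi> q n (snd \<omega>)) \<le> \<delta>} \<subseteq> A
         \<and> measure (sparse_model D n m \<mu>) A \<le> exp 1 * (pm / \<delta>)"
  proof (rule model_measure_bound[OF D sD mn, where B="\<lambda>F. MB F"])
    show "0 \<le> exp 1 * (pm / \<delta>)" using pm0 d by simp
    fix F assume F: "F \<subseteq> {..<n}" "card F = m"
    show "MB F \<in> sets (PiM {..<n} (\<lambda>_. borel :: real measure))"
      using MBs[OF F(1)] unfolding PS_def by auto
    show "measure (Qm D n F \<mu>) (MB F) \<le> exp 1 * (pm / \<delta>)" using MBb[OF F] .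
    fix X assume X: "X \<in> space (PiM {..<n} (\<lambda>_. borel :: real measure))"
      and P: "\<not> FNP (fst (F, X)) (BH_rej \<Psi> q n (snd (F, X))) \<le> \<delta>"
    show "X \<in> MB F" using good[OF F, of X] X P unfolding PS_def by auto
  qed
qed

end


lemma mm_facts:
  fixes \<beta> :: real and n :: nat
  assumes b: "0 < \<beta>" "\<beta> < 1" and n: "1 \<le> n"
  shows "1 \<le> nat \<lfloor>real n powr (1 - \<beta>)\<rfloor>" "nat \<lfloor>real n powr (1 - \<beta>)\<rfloor> \<le> n"
    "real n powr (1 - \<beta>) / 2 \<le> real (nat \<lfloor>real n powr (1 - \<beta>)\<rfloor>)"
proof -
  let ?x = "real n powr (1 - \<beta>)"
  have x1: "1 \<le> ?x" using n b by (intro ge_one_powr_ge_zero) auto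
  have xn: "?x \<le> real n" using n b powr_mono[of "1 - \<beta>" 1 "real n"] by auto
  have f1: "1 \<le> \<lfloor>?x\<rfloor>" using x1 by (simp add: one_le_floor)
  have fx: "real_of_int \<lfloor>?x\<rfloor> \<le> ?x" by (rule of_int_floor_le)
  have fx2: "?x < real_of_int \<lfloor>?x\<rfloor> + 1" by (rule real_of_int_floor_add_one_gt)
  have e: "real (nat \<lfloor>?x\<rfloor>) = real_of_int \<lfloor>?x\<rfloor>" using f1 by simp
  show "1 \<le> nat \<lfloor>?x\<rfloor>" using f1 by linarith
  have "real (nat \<lfloor>?x\<rfloor>) \<le> real n" using e fx xn by linarith
  then show "nat \<lfloor>?x\<rfloor> \<le> n" by (simp only: of_nat_le_iff)
  have "1 \<le> real_of_int \<lfloor>?x\<rfloor>" using f1 by simp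
  then show "?x / 2 \<le> real (nat \<lfloor>?x\<rfloor>)" using e fx2 by linarith
qed

context
  fixes D :: "real measure" and \<Psi> :: "real \<Rightarrow> real"
  assumes D: "prob_space D" and sD: "sets D = sets borel" and Psi: "\<forall>y. \<Psi> y = measure D {y..}"
begin

lemma asym_pm:
  fixes g s r :: real
  assumes g: "g > 0" and s: "0 < s" "s < r"
  shows "(\<lambda>n::nat. measure D {..< (g * s * ln (real n)) powr (1/g) - (g * r * ln (real n)) powr (1/g)}) \<longlonglongrightarrow> 0"
proof (rule order_tendstoI)
  fix a :: real assume "a < 0"
  then show "\<forall>\<^sub>F n in sequentially. a < measure D {..< (g * s * ln (real n)) powr (1/g) - (g * r * ln (real n)) powr (1/g)}"
    by (intro always_eventually allI) (metis measure_nonneg order.strict_trans1 not_le)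
next
  fix a :: real assume a: "0 < a"
  let ?f = "\<lambda>n::nat. (g * ln (real n)) powr (1/g)"
  let ?k = "s powr (1/g) - r powr (1/g)"
  have k: "?k < 0" using s g powr_less_mono2[of "1/g" s r] by simp
  have f: "filterlim ?f at_top sequentially" using g by real_asymp
  have diff: "(g * s * ln (real n)) powr (1/g) - (g * r * ln (real n)) powr (1/g) = ?k * ?f n" for n
  proof -
    have "g * s * ln (real n) = s * (g * ln (real n))" "g * r * ln (real n) = r * (g * ln (real n))" by simp_all
    then show ?thesis by (simp add: powr_mult algebra_simps)
  qed
  obtain K where K: "\<forall>x\<le>K. measure D {..<x} \<le> a / 2" using left_tail[OF D sD Psi, of "a/2"] a by auto
  have "\<forall>\<^sub>F n in sequentially. K / ?k \<le> ?f n" using f by (simp add: filterlim_at_top)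
  then show "\<forall>\<^sub>F n in sequentially. measure D {..< (g * s * ln (real n)) powr (1/g) - (g * r * ln (real n)) powr (1/g)} < a"
  proof (rule eventually_mono)
    fix n assume "K / ?k \<le> ?f n"
    then have "?k * ?f n \<le> ?k * (K / ?k)" using k by (intro mult_left_mono_neg) auto
    then have "?k * ?f n \<le> K" using k by simp
    then show "measure D {..< (g * s * ln (real n)) powr (1/g) - (g * r * ln (real n)) powr (1/g)} < a"
      using K a unfolding diff by fastforce
  qed
qed

end


lemma asym_thr:
  fixes \<gamma> \<beta> s :: real and \<Psi> :: "real \<Rightarrow> real" and q :: "nat \<Rightarrow> real"
  assumes g: "\<gamma> > 0" and b: "0 < \<beta>" "\<beta> < 1" and bs: "\<beta> < s"
    and agg: "AGG_right \<Psi> \<gamma>"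
    and qa: "\<forall>a>0. filterlim (\<lambda>n. real n powr a * q n) at_top sequentially"
  shows "\<forall>\<^sub>F n in sequentially. \<Psi> ((\<gamma> * s * ln (real n)) powr (1/\<gamma>))
            \<le> real (nat \<lfloor>real n powr (1 - \<beta>)\<rfloor>) * q n / (2 * real n)"
proof -
  define s2 where "s2 = (\<beta> + s) / 2"
  define c0 where "c0 = s2 / (\<gamma> * s)"
  define a where "a = s2 - \<beta>"
  have s0: "0 < s" using b bs by simp
  have a0: "0 < a" unfolding a_def s2_def using bs by simp
  have c0: "-1/\<gamma> < - c0"
  proof -
    have "s2 < s" unfolding s2_def using bs by simp
    then have "s2 / (\<gamma> * s) < s / (\<gamma> * s)" using g s0 by (intro divide_strict_right_mono) auto
    then show ?thesis unfolding c0_def using s0 by simp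
  qed
  have lim: "((\<lambda>x. x powr (-\<gamma>) * ln (\<Psi> x)) \<longlongrightarrow> -1/\<gamma>) at_top" using agg unfolding AGG_right_def by simp
  have ev1: "\<forall>\<^sub>F x in at_top. x powr (-\<gamma>) * ln (\<Psi> x) < - c0" by (rule order_tendstoD(2)[OF lim c0])
  let ?t = "\<lambda>n::nat. (\<gamma> * s * ln (real n)) powr (1/\<gamma>)"
  have tlim: "filterlim ?t at_top sequentially" using g s0 by real_asymp
  have evA: "\<forall>\<^sub>F n in sequentially. ?t n powr (-\<gamma>) * ln (\<Psi> (?t n)) < - c0"
    by (rule eventually_compose_filterlim[OF ev1 tlim])
  have evB: "\<forall>\<^sub>F n in sequentially. 4 \<le> real n powr a * q n"
    using qa a0 by (auto simp: filterlim_at_top)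
  have evC: "\<forall>\<^sub>F n in sequentially. 2 \<le> n" by (rule eventually_ge_at_top)
  show ?thesis using evA evB evC
  proof eventually_elim
    case (elim n)
    have n2: "2 \<le> real n" using elim(3) by simp
    have ln0: "0 < ln (real n)" using n2 by simp
    let ?L = "\<gamma> * s * ln (real n)"
    have L0: "0 < ?L" using g s0 ln0 by simp
    have t0: "0 < ?t n" using L0 g s0 ln0 by simp
    have tg: "?t n powr \<gamma> = ?L" using L0 g by (simp add: powr_powr)
    have inv: "?t n powr (-\<gamma>) * ?t n powr \<gamma> = 1" using t0 by (simp add: powr_minus)
    have "ln (\<Psi> (?t n)) = (?t n powr (-\<gamma>) * ln (\<Psi> (?t n))) * ?t n powr \<gamma>"
      using inv by (simp add: algebra_simps)
    also have "\<dots> \<le> (- c0) * ?t n powr \<gamma>"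
      using elim(1) t0 by (intro mult_right_mono) auto
    also have "\<dots> = - s2 * ln (real n)" unfolding tg c0_def using g s0 by simp
    finally have lnP: "ln (\<Psi> (?t n)) \<le> - s2 * ln (real n)" .
    have P: "\<Psi> (?t n) \<le> real n powr (- s2)"
    proof (cases "\<Psi> (?t n) > 0")
      case True
      have "\<Psi> (?t n) = exp (ln (\<Psi> (?t n)))" using True by simp
      also have "\<dots> \<le> exp (- s2 * ln (real n))" using lnP by simp
      also have "\<dots> = real n powr (- s2)" using n2 by (simp add: powr_def)
      finally show ?thesis .
    next
      case False then show ?thesis by (metis not_less order_trans powr_ge_zero)
    qed
    note mm = mm_facts[OF b, of n]
    have n1: "1 \<le> n" using elim(3) by simp
    have pa: "0 < real n powr a" using n2 by simp
    have q4: "4 * real n powr (- a) \<le> q n"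
    proof -
      have "4 / real n powr a \<le> q n" using elim(2) pa by (simp add: divide_simps mult.commute)
      then show ?thesis by (simp add: powr_minus divide_inverse)
    qed
    have key: "real n powr (1 - \<beta>) * real n powr (- a) = real n * real n powr (- s2)"
    proof -
      have "real n powr (1 - \<beta>) * real n powr (- a) = real n powr (1 - \<beta> + - a)" by (rule powr_add[symmetric])
      also have "1 - \<beta> + - a = 1 + - s2" unfolding a_def by simp
      also have "real n powr (1 + - s2) = real n * real n powr (- s2)" using n2 by (subst powr_add) simp
      finally show ?thesis .
    qed
    have "2 * real n * real n powr (- s2) = (real n powr (1 - \<beta>) / 2) * (4 * real n powr (- a))"
      using key by (simp add: mult.commute)
    also have "\<dots> \<le> real (nat \<lfloor>real n powr (1 - \<beta>)\<rfloor>) * q n"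
      using mm(3)[OF n1] q4 by (intro mult_mono) auto
    finally have "2 * real n * real n powr (- s2) \<le> real (nat \<lfloor>real n powr (1 - \<beta>)\<rfloor>) * q n" .
    then have "real n powr (- s2) \<le> real (nat \<lfloor>real n powr (1 - \<beta>)\<rfloor>) * q n / (2 * real n)"
      using n2 by (simp add: divide_simps mult.commute mult.left_commute)
    then show ?case using P by linarith
  qed
qed


lemma FNP_le1: "FNP F R \<le> 1"
proof (cases "finite F \<and> card F \<noteq> 0")
  case True
  then have "card (F - R) \<le> card F" by (intro card_mono) auto
  then show ?thesis unfolding FNP_def using True by simp
next
  case False
  then have "card F = 0" by auto
  then show ?thesis unfolding FNP_def by simp
qed

lemma FDP_le1: "FDP F R \<le> 1"
proof (cases "finite R \<and> card R \<noteq> 0")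
  case True
  then have "card (R - F) \<le> card R" by (intro card_mono) auto
  then show ?thesis unfolding FDP_def using True by simp
next
  case False
  then have "card R = 0" by auto
  then show ?thesis unfolding FDP_def by simp
qed

lemma FNP_ge0: "0 \<le> FNP F R" unfolding FNP_def by simp
lemma FDP_ge0: "0 \<le> FDP F R" unfolding FDP_def by simp

theorem theorem2:
  fixes \<gamma> \<beta> r :: real and \<Psi> :: "real \<Rightarrow> real" and D :: "real measure"
    and q :: "nat \<Rightarrow> real"
  assumes "\<gamma> \<ge> 1" and "0 < \<beta>" and "\<beta> < 1" and "r > 0" and "r > \<beta>"
    and "prob_space D" and "sets D = sets borel"
    and "\<forall>y. \<Psi> y = measure D {y..}"
    and "continuous_on UNIV \<Psi>"
    and "AGG_right \<Psi> \<gamma>"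
    and "\<forall>n. 0 < q n \<and> q n < 1"
    and "\<forall>a>0. filterlim (\<lambda>n. real n powr a * q n) at_top sequentially"
  shows
    "let M = (\<lambda>n. sparse_model D n (nat \<lfloor>real n powr (1 - \<beta>)\<rfloor>)
                        ((\<gamma> * r * ln (real n)) powr (1 / \<gamma>)))
     in (\<forall>\<epsilon>>0. (\<lambda>n. measure (M n)
              {\<omega> \<in> space (M n). FNP (fst \<omega>) (BH_rej \<Psi> (q n) n (snd \<omega>)) > \<epsilon>})
            \<longlonglongrightarrow> 0)
      \<and> (q \<longlonglongrightarrow> 0 \<longrightarrow>
          (\<lambda>n. (\<integral>\<omega>. FDP (fst \<omega>) (BH_rej \<Psi> (q n) n (snd \<omega>)) \<partial>M n)
              + (\<integral>\<omega>. FNP (fst \<omega>) (BH_rej \<Psi> (q n) n (snd \<omega>)) \<partial>M n)) \<longlonglongrightarrow> 0)"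
proof -
  note D = assms(6) and sD = assms(7) and Psi = assms(8) and cont = assms(9) and agg = assms(10)
  define s where "s = (\<beta> + r) / 2"
  have bs: "\<beta> < s" "s < r" "0 < s" using assms(2,5) unfolding s_def by auto
  have g: "\<gamma> > 0" using assms(1) by simp
  define mm where "mm = (\<lambda>n::nat. nat \<lfloor>real n powr (1 - \<beta>)\<rfloor>)"
  define mu where "mu = (\<lambda>n::nat. (\<gamma> * r * ln (real n)) powr (1 / \<gamma>))"
  define t where "t = (\<lambda>n::nat. (\<gamma> * s * ln (real n)) powr (1 / \<gamma>))"
  define M where "M = (\<lambda>n. sparse_model D n (mm n) (mu n))"
  define pm where "pm = (\<lambda>n. measure D {..< t n - mu n})"
  have q0: "0 \<le> q n" for n using assms(11) by (simp add: less_imp_le)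
  have ev1: "\<forall>\<^sub>F n in sequentially. 1 \<le> mm n \<and> mm n \<le> n"
    using eventually_ge_at_top[of "1::nat"]
    by eventually_elim (use mm_facts[OF assms(2,3)] in \<open>auto simp: mm_def\<close>)
  have ev2: "\<forall>\<^sub>F n in sequentially. \<Psi> (t n) \<le> real (mm n) * q n / (2 * real n)"
    unfolding t_def mm_def by (rule asym_thr[OF g assms(2,3) bs(1) agg assms(12)])
  have pmlim: "pm \<longlonglongrightarrow> 0"
    unfolding pm_def t_def mu_def by (rule asym_pm[OF D sD Psi g bs(3) bs(2)])
  have Mprob: "prob_space (M n)" if "mm n \<le> n" for n
    unfolding M_def by (rule model_facts(7)[OF D sD that])
  have key: "\<forall>\<^sub>F n in sequentially.
      (\<exists>A\<in>sets (M n). {\<omega> \<in> space (M n). \<not> (FNP (fst \<omega>) (BH_rej \<Psi> (q n) n (snd \<omega>)) \<le> \<delta> \<and> FDP (fst \<omega>) (BH_rej \<Psi> (q n) n (snd \<omega>)) \<le> \<delta>)} \<subseteq> A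
         \<and> measure (M n) A \<le> exp 1 * (pm n / \<delta>) + 2 * (exp 1 * ((1 + 2 / \<delta>) * q n)))
      \<and> (\<exists>A\<in>sets (M n). {\<omega> \<in> space (M n). \<not> FNP (fst \<omega>) (BH_rej \<Psi> (q n) n (snd \<omega>)) \<le> \<delta>} \<subseteq> A
         \<and> measure (M n) A \<le> exp 1 * (pm n / \<delta>))
      \<and> prob_space (M n)"
    if d: "0 < \<delta>" "\<delta> \<le> 1/2" for \<delta>
    using ev1 ev2
  proof eventually_elim
    case (elim n)
    note pn = per_n[OF D sD Psi cont, of "mm n" n "q n" \<delta> "t n" "mu n", OF conjunct1[OF elim(1)] conjunct2[OF elim(1)] q0 d elim(2)]
    show ?case using pn Mprob[of n] elim(1) unfolding M_def pm_def by auto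
  qed
  have P1: "\<forall>\<epsilon>>0. (\<lambda>n. measure (M n) {\<omega> \<in> space (M n). FNP (fst \<omega>) (BH_rej \<Psi> (q n) n (snd \<omega>)) > \<epsilon>}) \<longlonglongrightarrow> 0"
  proof (intro allI impI)
    fix \<epsilon> :: real assume e: "0 < \<epsilon>"
    define \<delta> where "\<delta> = min \<epsilon> (1/2)"
    have d: "0 < \<delta>" "\<delta> \<le> 1/2" "\<delta> \<le> \<epsilon>" using e unfolding \<delta>_def by auto
    show "(\<lambda>n. measure (M n) {\<omega> \<in> space (M n). FNP (fst \<omega>) (BH_rej \<Psi> (q n) n (snd \<omega>)) > \<epsilon>}) \<longlonglongrightarrow> 0"
    proof (rule tendsto_sandwich[where f="\<lambda>_. 0" and h="\<lambda>n. exp 1 * (pm n / \<delta>)"])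
      show "\<forall>\<^sub>F n in sequentially. 0 \<le> measure (M n) {\<omega> \<in> space (M n). FNP (fst \<omega>) (BH_rej \<Psi> (q n) n (snd \<omega>)) > \<epsilon>}"
        by simp
      show "\<forall>\<^sub>F n in sequentially. measure (M n) {\<omega> \<in> space (M n). FNP (fst \<omega>) (BH_rej \<Psi> (q n) n (snd \<omega>)) > \<epsilon>} \<le> exp 1 * (pm n / \<delta>)"
        using key[OF d(1,2)]
      proof eventually_elim
        case (elim n)
        then obtain A where A: "A \<in> sets (M n)" "{\<omega> \<in> space (M n). \<not> FNP (fst \<omega>) (BH_rej \<Psi> (q n) n (snd \<omega>)) \<le> \<delta>} \<subseteq> A"
          "measure (M n) A \<le> exp 1 * (pm n / \<delta>)" by blast
        have "{\<omega> \<in> space (M n). FNP (fst \<omega>) (BH_rej \<Psi> (q n) n (snd \<omega>)) > \<epsilon>} \<subseteq> A"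
          using A(2) d(3) by auto
        then have "measure (M n) {\<omega> \<in> space (M n). FNP (fst \<omega>) (BH_rej \<Psi> (q n) n (snd \<omega>)) > \<epsilon>} \<le> measure (M n) A"
          using elim A(1) by (intro measure_bound_from_set) auto
        then show ?case using A(3) by linarith
      qed
      show "(\<lambda>_. 0) \<longlonglongrightarrow> (0::real)" by simp
      have "(\<lambda>n. exp 1 * (pm n / \<delta>)) \<longlonglongrightarrow> exp 1 * (0 / \<delta>)"
        using d by (intro tendsto_intros pmlim) auto
      then show "(\<lambda>n. exp 1 * (pm n / \<delta>)) \<longlonglongrightarrow> 0" by simp
    qed
  qed
  have P2: "q \<longlonglongrightarrow> 0 \<longrightarrow>
          (\<lambda>n. (\<integral>\<omega>. FDP (fst \<omega>) (BH_rej \<Psi> (q n) n (snd \<omega>)) \<partial>M n)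
              + (\<integral>\<omega>. FNP (fst \<omega>) (BH_rej \<Psi> (q n) n (snd \<omega>)) \<partial>M n)) \<longlonglongrightarrow> 0"
  proof
    assume qlim: "q \<longlonglongrightarrow> 0"
    let ?S = "\<lambda>n. (\<integral>\<omega>. FDP (fst \<omega>) (BH_rej \<Psi> (q n) n (snd \<omega>)) \<partial>M n)
              + (\<integral>\<omega>. FNP (fst \<omega>) (BH_rej \<Psi> (q n) n (snd \<omega>)) \<partial>M n)"
    show "?S \<longlonglongrightarrow> 0"
    proof (rule order_tendstoI)
      fix a :: real assume "a < 0"
      moreover have "0 \<le> ?S n" for n
        by (intro add_nonneg_nonneg Bochner_Integration.integral_nonneg FNP_ge0 FDP_ge0)
      ultimately show "\<forall>\<^sub>F n in sequentially. a < ?S n"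
        by (intro always_eventually allI) (smt (verit))
    next
      fix a :: real assume a: "0 < a"
      define \<delta> where "\<delta> = min (a/8) (1/2)"
      have d: "0 < \<delta>" "\<delta> \<le> 1/2" "\<delta> \<le> a/8" using a unfolding \<delta>_def by auto
      let ?b = "\<lambda>n. exp 1 * (pm n / \<delta>) + 2 * (exp 1 * ((1 + 2 / \<delta>) * q n))"
      have "?b \<longlonglongrightarrow> exp 1 * (0 / \<delta>) + 2 * (exp 1 * ((1 + 2 / \<delta>) * 0))"
        using d by (intro tendsto_intros pmlim qlim) auto
      then have "?b \<longlonglongrightarrow> 0" by simp
      then have evb: "\<forall>\<^sub>F n in sequentially. ?b n < a/8" using a by (intro order_tendstoD(2)) auto
      show "\<forall>\<^sub>F n in sequentially. ?S n < a"
        using key[OF d(1,2)] evb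
      proof eventually_elim
        case (elim n)
        then obtain A where A: "A \<in> sets (M n)"
          "{\<omega> \<in> space (M n). \<not> (FNP (fst \<omega>) (BH_rej \<Psi> (q n) n (snd \<omega>)) \<le> \<delta> \<and> FDP (fst \<omega>) (BH_rej \<Psi> (q n) n (snd \<omega>)) \<le> \<delta>)} \<subseteq> A"
          "measure (M n) A \<le> ?b n" by blast
        have pr: "prob_space (M n)" using elim by blast
        have i1: "(\<integral>\<omega>. FDP (fst \<omega>) (BH_rej \<Psi> (q n) n (snd \<omega>)) \<partial>M n) \<le> \<delta> + measure (M n) A"
        proof (rule integral_bound_from_set[where P="\<lambda>\<omega>. \<not> (FNP (fst \<omega>) (BH_rej \<Psi> (q n) n (snd \<omega>)) \<le> \<delta> \<and> FDP (fst \<omega>) (BH_rej \<Psi> (q n) n (snd \<omega>)) \<le> \<delta>)"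
            and f="\<lambda>\<omega>. FDP (fst \<omega>) (BH_rej \<Psi> (q n) n (snd \<omega>))", OF pr A(1,2)])
          show "0 \<le> \<delta>" using d(1) by simp
          show "FDP (fst \<omega>) (BH_rej \<Psi> (q n) n (snd \<omega>)) \<le> 1" for \<omega> by (rule FDP_le1)
          show "FDP (fst \<omega>) (BH_rej \<Psi> (q n) n (snd \<omega>)) \<le> \<delta>"
            if "\<not> \<not> (FNP (fst \<omega>) (BH_rej \<Psi> (q n) n (snd \<omega>)) \<le> \<delta> \<and> FDP (fst \<omega>) (BH_rej \<Psi> (q n) n (snd \<omega>)) \<le> \<delta>)" for \<omega>
            using that by blast
        qed
        have i2: "(\<integral>\<omega>. FNP (fst \<omega>) (BH_rej \<Psi> (q n) n (snd \<omega>)) \<partial>M n) \<le> \<delta> + measure (M n) A"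
        proof (rule integral_bound_from_set[where P="\<lambda>\<omega>. \<not> (FNP (fst \<omega>) (BH_rej \<Psi> (q n) n (snd \<omega>)) \<le> \<delta> \<and> FDP (fst \<omega>) (BH_rej \<Psi> (q n) n (snd \<omega>)) \<le> \<delta>)"
            and f="\<lambda>\<omega>. FNP (fst \<omega>) (BH_rej \<Psi> (q n) n (snd \<omega>))", OF pr A(1,2)])
          show "0 \<le> \<delta>" using d(1) by simp
          show "FNP (fst \<omega>) (BH_rej \<Psi> (q n) n (snd \<omega>)) \<le> 1" for \<omega> by (rule FNP_le1)
          show "FNP (fst \<omega>) (BH_rej \<Psi> (q n) n (snd \<omega>)) \<le> \<delta>"
            if "\<not> \<not> (FNP (fst \<omega>) (BH_rej \<Psi> (q n) n (snd \<omega>)) \<le> \<delta> \<and> FDP (fst \<omega>) (BH_rej \<Psi> (q n) n (snd \<omega>)) \<le> \<delta>)" for \<omega>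
            using that by blast
        qed
        show ?case using i1 i2 A(3) elim(2) d by linarith
      qed
    qed
  qed
  show ?thesis unfolding Let_def using P1 P2 unfolding M_def mm_def mu_def by (rule conjI)
qed


end
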